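(* Let $\mathbb{F}$ be a field of characteristic $2$. Then the identity matrix $I\in\mathfrak{gl}(n,\mathbb{F})$ can be written as a finite sum of matrices $N\in\mathfrak{gl}(n,\mathbb{F})$ with $N^2=0$ if and only if $n$ is even. *)

theory Defs
  imports "HOL-Analysis.Analysis"
begin

end

theory Submission
  imports Defs
begin

lemma two_zero:
  assumes "CHAR('a::field) = 2"
  shows "(2::'a) = 0"
proof -
  have "(of_nat 2::'a) = 0" using assms by (simp only: of_nat_eq_0_iff_char_dvd) simp
  thus ?thesis by simp
qed

lemma double_zero:
  assumes "(2::'a::field) = 0"
  shows "(x::'a) + x = 0"
proof -
  have "x + x = 2 * x" by simp
  thus ?thesis using assms by simp
qed

lemma frob_sum:
  assumes "(2::'a::field) = 0" "finite S"
  shows "(\<Sum>i\<in>S. a i)^2 = (\<Sum>i\<in>S. (a i::'a)^2)"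
  using assms(2)
proof (induction S rule: finite_induct)
  case (insert x F)
  have "(a x + sum a F)^2 = (a x)^2 + (sum a F)^2 + 2 * (a x * sum a F)"
    by (simp add: power2_eq_square algebra_simps)
  thus ?case using insert assms(1) by simp
qed simp

lemma sym_double_sum:
  assumes "(2::'a::field) = 0" "finite S" "\<And>i j. x i j = x j i"
  shows "(\<Sum>i\<in>S. \<Sum>j\<in>S. (x i j::'a)) = (\<Sum>i\<in>S. x i i)"
  using assms(2)
proof (induction S rule: finite_induct)
  case (insert a F)
  have "(\<Sum>i\<in>insert a F. \<Sum>j\<in>insert a F. x i j)
      = (\<Sum>j\<in>insert a F. x a j) + (\<Sum>i\<in>F. \<Sum>j\<in>insert a F. x i j)"
    using insert by simp
  also have "\<dots> = x a a + (\<Sum>j\<in>F. x a j) + ((\<Sum>i\<in>F. x i a) + (\<Sum>i\<in>F. \<Sum>j\<in>F. x i j))"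
    using insert by (simp add: sum.distrib)
  also have "(\<Sum>i\<in>F. x i a) = (\<Sum>j\<in>F. x a j)" using assms(3) by simp
  also have "x a a + (\<Sum>j\<in>F. x a j) + ((\<Sum>j\<in>F. x a j) + (\<Sum>i\<in>F. \<Sum>j\<in>F. x i j))
     = x a a + (\<Sum>i\<in>F. \<Sum>j\<in>F. x i j) + ((\<Sum>j\<in>F. x a j) + (\<Sum>j\<in>F. x a j))"
    by (simp add: algebra_simps)
  also have "\<dots> = x a a + (\<Sum>i\<in>F. \<Sum>j\<in>F. x i j)"
    using double_zero[OF assms(1)] by simp
  finally show ?case using insert by simp
qed simp

lemma trace_sq_zero:
  assumes "(2::'a::field) = 0" "(N::'a^'n^'n) ** N = 0"
  shows "(\<Sum>i\<in>UNIV. N$i$i) = 0"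
proof -
  have "0 = (\<Sum>i\<in>UNIV. (N ** N)$i$i)" using assms(2) by simp
  also have "\<dots> = (\<Sum>i\<in>UNIV. \<Sum>j\<in>UNIV. N$i$j * N$j$i)"
    by (simp add: matrix_matrix_mult_def)
  also have "\<dots> = (\<Sum>i\<in>UNIV. N$i$i * N$i$i)"
    by (rule sym_double_sum[OF assms(1)]) (auto simp: mult.commute)
  also have "\<dots> = (\<Sum>i\<in>UNIV. (N$i$i)^2)" by (simp add: power2_eq_square)
  also have "\<dots> = (\<Sum>i\<in>UNIV. N$i$i)^2" using frob_sum[OF assms(1), of UNIV "\<lambda>i. N$i$i"] by simp
  finally show ?thesis by simp
qed

lemma construct:
  fixes \<sigma> :: "'n::finite \<Rightarrow> 'n" and f :: "'n \<Rightarrow> bool"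
  assumes two: "(2::'a::field) = 0"
    and inv: "\<And>i. \<sigma> (\<sigma> i) = i" and fp: "\<And>i. \<sigma> i \<noteq> i" and fs: "\<And>i. f (\<sigma> i) = (\<not> f i)"
  shows "\<exists>(k::nat) (N :: nat \<Rightarrow> 'a ^ 'n ^ 'n).
            (\<forall>i<k. N i ** N i = 0) \<and> (\<Sum>i<k. N i) = mat 1"
proof -
  define A :: "'a^'n^'n" where "A = (\<chi> i j. if j = i \<or> j = \<sigma> i then 1 else 0)"
  define B :: "'a^'n^'n" where "B = (\<chi> i j. if j = \<sigma> i \<and> f i then 1 else 0)"
  define C :: "'a^'n^'n" where "C = (\<chi> i j. if j = \<sigma> i \<and> \<not> f i then 1 else 0)"
  define N where "N = (\<lambda>t::nat. if t = 0 then A else if t = 1 then B else C)"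
  have sp: "(if k = i \<or> k = \<sigma> i then x k else 0) = (if k = i then x k else 0) + (if k = \<sigma> i then x k else 0)"
    for k i and x :: "'n \<Rightarrow> 'a" using fp[of i] by auto
  have "A ** A = 0"
  proof -
    have "(A ** A)$i$j = 0" for i j
    proof -
      have "(A ** A)$i$j = (\<Sum>k\<in>UNIV. if k = i \<or> k = \<sigma> i then A$k$j else 0)"
        unfolding matrix_matrix_mult_def A_def by (auto intro!: sum.cong)
      also have "\<dots> = (\<Sum>k\<in>UNIV. (if k = i then A$k$j else 0) + (if k = \<sigma> i then A$k$j else 0))"
        by (rule sum.cong[OF refl sp])
      also have "\<dots> = A$i$j + A$(\<sigma> i)$j"
        by (simp add: sum.distrib)
      also have "A$(\<sigma> i)$j = A$i$j" unfolding A_def using inv[of i] by auto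
      finally show ?thesis using double_zero[OF two] by simp
    qed
    thus ?thesis by (simp add: vec_eq_iff)
  qed
  moreover have "B ** B = 0"
  proof -
    have "(B ** B)$i$j = 0" for i j
    proof -
      have "(B ** B)$i$j = (\<Sum>k\<in>UNIV. if k = \<sigma> i then (if f i then B$k$j else 0) else 0)"
      proof -
        have r: "B$i$k = (if k = \<sigma> i then (if f i then 1 else 0) else 0)" for k
          unfolding B_def by simp
        show ?thesis unfolding matrix_matrix_mult_def vec_lambda_beta
          by (intro sum.cong refl) (simp add: r)
      qed
      also have "\<dots> = (if f i then B$(\<sigma> i)$j else 0)" by simp
      also have "\<dots> = 0" unfolding B_def using fs[of i] by auto
      finally show ?thesis .
    qed
    thus ?thesis by (simp add: vec_eq_iff)
  qed
  moreover have "C ** C = 0"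
  proof -
    have "(C ** C)$i$j = 0" for i j
    proof -
      have "(C ** C)$i$j = (\<Sum>k\<in>UNIV. if k = \<sigma> i then (if \<not> f i then C$k$j else 0) else 0)"
      proof -
        have r: "C$i$k = (if k = \<sigma> i then (if \<not> f i then 1 else 0) else 0)" for k
          unfolding C_def by simp
        show ?thesis unfolding matrix_matrix_mult_def vec_lambda_beta
          by (intro sum.cong refl) (simp add: r)
      qed
      also have "\<dots> = (if \<not> f i then C$(\<sigma> i)$j else 0)" by simp
      also have "\<dots> = 0" unfolding C_def using fs[of i] by auto
      finally show ?thesis .
    qed
    thus ?thesis by (simp add: vec_eq_iff)
  qed
  moreover have "A + B + C = mat 1"
  proof -
    have "(A + B + C)$i$j = mat 1 $i$j" for i j
      unfolding A_def B_def C_def mat_def using fp[of i] double_zero[OF two, of 1] by auto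
    thus ?thesis by (simp add: vec_eq_iff)
  qed
  ultimately have "(\<forall>t<3. N t ** N t = 0) \<and> (\<Sum>t<3. N t) = mat 1"
    unfolding N_def by (auto simp: numeral_3_eq_3 less_Suc_eq add.commute add.left_commute)
  thus ?thesis by blast
qed

lemma pairing:
  assumes "even CARD('n::finite)"
  shows "\<exists>(\<sigma>::'n\<Rightarrow>'n) f. (\<forall>i. \<sigma> (\<sigma> i) = i) \<and> (\<forall>i. \<sigma> i \<noteq> i) \<and> (\<forall>i. f (\<sigma> i) = (\<not> f i))"
proof -
  let ?n = "CARD('n)"
  obtain h where h: "bij_betw h {0..<?n} (UNIV::'n set)"
    using ex_bij_betw_nat_finite[of "UNIV::'n set"] by auto
  define g where "g = inv_into {0..<?n} h"
  have g: "bij_betw g UNIV {0..<?n}" unfolding g_def using h by (rule bij_betw_inv_into)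
  have hg: "h (g i) = i" for i unfolding g_def using h by (simp add: bij_betw_inv_into_right)
  have gh: "a < ?n \<Longrightarrow> g (h a) = a" for a unfolding g_def using h
    by (simp add: bij_betw_inv_into_left)
  have gl: "g i < ?n" for i using g by (auto simp: bij_betw_def)
  define p where "p = (\<lambda>a::nat. if even a then a + 1 else a - 1)"
  have pl: "a < ?n \<Longrightarrow> p a < ?n" for a using assms unfolding p_def
    by (auto, presburger)
  define \<sigma> where "\<sigma> = (\<lambda>i. h (p (g i)))"
  define f where "f = (\<lambda>i. even (g i))"
  have gs: "g (\<sigma> i) = p (g i)" for i unfolding \<sigma>_def using gh pl gl by blast
  have "\<sigma> (\<sigma> i) = i" for i
  proof -
    have "p (p (g i)) = g i" unfolding p_def by presburger
    thus ?thesis unfolding \<sigma>_def using gs[of i] hg unfolding \<sigma>_def by metis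
  qed
  moreover have "\<sigma> i \<noteq> i" for i
  proof
    assume "\<sigma> i = i"
    hence "p (g i) = g i" using gs by metis
    thus False unfolding p_def by presburger
  qed
  moreover have "f (\<sigma> i) = (\<not> f i)" for i
    unfolding f_def gs p_def by presburger
  ultimately show ?thesis by blast
qed

theorem corollary2:
  assumes "CHAR('a::field) = 2"
  shows "(\<exists>(k::nat) (N :: nat \<Rightarrow> 'a ^ 'n ^ 'n).
            (\<forall>i<k. N i ** N i = 0) \<and> (\<Sum>i<k. N i) = mat 1)
         \<longleftrightarrow> even CARD('n)"
proof
  have two: "(2::'a) = 0" using two_zero[OF assms] .
  assume "\<exists>(k::nat) (N :: nat \<Rightarrow> 'a ^ 'n ^ 'n).
            (\<forall>i<k. N i ** N i = 0) \<and> (\<Sum>i<k. N i) = mat 1"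
  then obtain k and N :: "nat \<Rightarrow> 'a ^ 'n ^ 'n" where
    N: "\<forall>i<k. N i ** N i = 0" "(\<Sum>i<k. N i) = mat 1" by blast
  have "(of_nat CARD('n)::'a) = (\<Sum>j\<in>UNIV. (mat 1::'a^'n^'n)$j$j)"
    by (simp add: mat_def)
  also have "\<dots> = (\<Sum>j\<in>UNIV. \<Sum>i<k. N i$j$j)"
    by (simp add: N(2)[symmetric] sum_component)
  also have "\<dots> = (\<Sum>i<k. \<Sum>j\<in>UNIV. N i$j$j)" by (rule sum.swap)
  also have "\<dots> = 0" by (intro sum.neutral) (simp add: trace_sq_zero[OF two] N(1))
  finally have "CHAR('a) dvd CARD('n)" by (simp only: of_nat_eq_0_iff_char_dvd)
  thus "even CARD('n)" using assms by simp
next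
  have two: "(2::'a) = 0" using two_zero[OF assms] .
  assume "even CARD('n)"
  then obtain \<sigma> :: "'n \<Rightarrow> 'n" and f where
    "\<forall>i. \<sigma> (\<sigma> i) = i" "\<forall>i. \<sigma> i \<noteq> i" "\<forall>i. f (\<sigma> i) = (\<not> f i)"
    using pairing by blast
  thus "\<exists>(k::nat) (N :: nat \<Rightarrow> 'a ^ 'n ^ 'n).
            (\<forall>i<k. N i ** N i = 0) \<and> (\<Sum>i<k. N i) = mat 1"
    using construct[OF two, of \<sigma> f] by blast
qed

end
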